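(* Let $D>0$, $g>0$, $l_{\mathrm{c}}>0$, $c_{\infty}>0$ and $c_{\mathrm{s}}\ge 0$ be constants, and consider pairs $(l_{\infty},c)$ with $l_{\infty}>0$ and $c\in C^2([0,l_{\infty}])$ satisfying \[ D c''(x)-g c(x)=0\ (0<x<l_{\infty}),\qquad D c'(l_{\infty})=-gl_{\mathrm{c}}c_{\infty},\qquad c(l_{\infty})=c_{\infty},\qquad c(0)=c_{\mathrm{s}} \] (steady-state solutions). Such a pair exists if and only if $c_{\mathrm{s}}>c_{\infty}$. In that case the steady-state solution is unique: $l_{\infty}>0$ is uniquely determined and \[ c(x)=\frac{c_{\infty}}{2}\left[\left(1-l_{\mathrm{c}}\sqrt{\tfrac{g}{D}}\right)\mathrm{e}^{(x-l_{\infty})\sqrt{g/D}}+\left(1+l_{\mathrm{c}}\sqrt{\tfrac{g}{D}}\right)\mathrm{e}^{-(x-l_{\infty})\sqrt{g/D}}\right],\quad 0\le x\le l_{\infty}, \] which is a decreasing function.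
   Context: This is the steady-state problem of a one-dimensional axonal growth model without active transport ($a=0$): $D$ is the diffusion coefficient, $g$ the degradation rate, $l_{\mathrm{c}}$ the characteristic growth-cone length, $c_{\infty}$ the steady-state growth cone concentration, $c_{\mathrm{s}}$ the soma concentration, and $l_{\infty}$ the axon length. The length $l_{\infty}$ is the unique positive solution of $\frac12\left[\left(1-l_{\mathrm{c}}\sqrt{g/D}\right)\mathrm{e}^{-l_{\infty}\sqrt{g/D}}+\left(1+l_{\mathrm{c}}\sqrt{g/D}\right)\mathrm{e}^{l_{\infty}\sqrt{g/D}}\right]=c_{\mathrm{s}}/c_{\infty}$. *)

theory Defs
  imports "HOL-Analysis.Analysis"
begin

definition steady_state ::
  "real \<Rightarrow> real \<Rightarrow> real \<Rightarrow> real \<Rightarrow> real \<Rightarrow> real \<Rightarrow> (real \<Rightarrow> real) \<Rightarrow> bool" where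
  "steady_state D g lc cinf cs l c \<longleftrightarrow>
     l > 0 \<and>
     (\<exists>c1 c2.
        (\<forall>x\<in>{0..l}. (c has_real_derivative c1 x) (at x within {0..l})) \<and>
        (\<forall>x\<in>{0..l}. (c1 has_real_derivative c2 x) (at x within {0..l})) \<and>
        continuous_on {0..l} c2 \<and>
        (\<forall>x. 0 < x \<and> x < l \<longrightarrow> D * c2 x - g * c x = 0) \<and>
        D * c1 l = - g * lc * cinf) \<and>
     c l = cinf \<and> c 0 = cs"

definition steady_profile :: "real \<Rightarrow> real \<Rightarrow> real \<Rightarrow> real \<Rightarrow> real \<Rightarrow> real \<Rightarrow> real" where
  "steady_profile D g lc cinf l x =
     cinf / 2 * ((1 - lc * sqrt (g / D)) * exp ((x - l) * sqrt (g / D))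
               + (1 + lc * sqrt (g / D)) * exp (- (x - l) * sqrt (g / D)))"

end

theory Submission
  imports Defs
begin

definition pr :: "real \<Rightarrow> real \<Rightarrow> real \<Rightarrow> real \<Rightarrow> real \<Rightarrow> real" where
  "pr k lc cinf l x = cinf / 2 * ((1 - lc * k) * exp ((x - l) * k) + (1 + lc * k) * exp (- (x - l) * k))"

definition dpr :: "real \<Rightarrow> real \<Rightarrow> real \<Rightarrow> real \<Rightarrow> real \<Rightarrow> real" where
  "dpr k lc cinf l x = cinf / 2 * k * ((1 - lc * k) * exp ((x - l) * k) - (1 + lc * k) * exp (- (x - l) * k))"

lemma pr_deriv: "((pr k lc cinf l) has_real_derivative dpr k lc cinf l x) (at x)"
  unfolding pr_def dpr_def
  by (auto intro!: derivative_eq_intros simp: algebra_simps)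

lemma dpr_deriv: "((dpr k lc cinf l) has_real_derivative k^2 * pr k lc cinf l x) (at x)"
  unfolding pr_def dpr_def
  by (auto intro!: derivative_eq_intros simp: algebra_simps power2_eq_square)

lemma pr_l: "pr k lc cinf l l = cinf" unfolding pr_def by simp
lemma dpr_l: "dpr k lc cinf l l = - cinf * k^2 * lc" unfolding dpr_def by (simp add: algebra_simps power2_eq_square)

lemma key_neg:
  fixes a E1 E2 :: real
  assumes "a > 0" "0 < E1" "E1 \<le> E2"
  shows "(1 - a) * E1 - (1 + a) * E2 < 0"
proof (cases "1 - a \<ge> 0")
  case True
  then have "(1 - a) * E1 \<le> (1 - a) * E2" using assms by (simp add: mult_left_mono)
  moreover have "(1 - a) * E2 < (1 + a) * E2" using assms by simp
  ultimately show ?thesis by linarith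
next
  case False
  then have "(1 - a) * E1 < 0" using assms by (simp add: mult_neg_pos)
  moreover have "(1 + a) * E2 > 0" using assms by simp
  ultimately show ?thesis by linarith
qed

lemma dpr_neg:
  assumes "k > 0" "lc > 0" "cinf > 0" "x \<le> l"
  shows "dpr k lc cinf l x < 0"
proof -
  have "exp ((x - l) * k) \<le> exp (- (x - l) * k)"
    using assms by (simp add: mult_nonpos_nonneg)
  then have "(1 - lc * k) * exp ((x - l) * k) - (1 + lc * k) * exp (- (x - l) * k) < 0"
    by (intro key_neg) (use assms in auto)
  then show ?thesis unfolding dpr_def using assms by (simp add: mult_pos_neg)
qed

definition F :: "real \<Rightarrow> real \<Rightarrow> real \<Rightarrow> real \<Rightarrow> real" where
  "F k lc cinf l = pr k lc cinf l 0"

lemma F_deriv: "((F k lc cinf) has_real_derivative - dpr k lc cinf l 0) (at l)"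
  unfolding F_def pr_def dpr_def
  by (auto intro!: derivative_eq_intros simp: algebra_simps)

lemma F_mono:
  assumes "k > 0" "lc > 0" "cinf > 0" "0 \<le> a" "a < b"
  shows "F k lc cinf a < F k lc cinf b"
  by (rule DERIV_pos_imp_increasing[OF assms(5)])
     (use F_deriv dpr_neg[OF assms(1-3)] assms in force)

lemma F_0: "F k lc cinf 0 = cinf" unfolding F_def pr_def by simp

lemma F_big:
  assumes "k > 0" "lc > 0" "cinf > 0" "l \<ge> 0"
  shows "F k lc cinf l \<ge> cinf / 2 * (1 + lc * k) * (l * k)"
proof -
  have e1: "exp (- (l * k)) \<le> 1" "exp (-(l*k)) > 0" using assms by auto
  have e2: "exp (l * k) \<ge> 1 + l * k" by (rule exp_ge_add_one_self)
  have "(1 - lc * k) * exp (- (l * k)) \<ge> - (1 + lc * k)"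
  proof (cases "1 - lc * k \<ge> 0")
    case True
    have a: "(1 - lc * k) * exp (- (l * k)) \<ge> 0" using True e1 by simp
    have "lc * k > 0" using assms by simp
    then show ?thesis using a by linarith
  next
    case False
    then have "(1 - lc * k) * exp (- (l * k)) \<ge> (1 - lc * k) * 1"
      using e1 by (intro mult_left_mono_neg) auto
    moreover have "lc * k > 0" using assms by simp
    moreover have "(1 - lc * k) * 1 = 1 - lc * k" by simp
    ultimately show ?thesis by linarith
  qed
  moreover have "(1 + lc * k) * exp (l * k) \<ge> (1 + lc * k) * (1 + l * k)"
    using e2 assms by (intro mult_left_mono) (auto intro: add_nonneg_nonneg)
  ultimately have "(1 - lc * k) * exp (- (l * k)) + (1 + lc * k) * exp (l * k) \<ge> (1 + lc * k) * (l * k)"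
    by (simp add: algebra_simps)
  then have "cinf / 2 * ((1 - lc * k) * exp (- (l * k)) + (1 + lc * k) * exp (l * k)) \<ge> cinf / 2 * ((1 + lc * k) * (l * k))"
    using assms by (intro mult_left_mono) auto
  moreover have "F k lc cinf l = cinf / 2 * ((1 - lc * k) * exp (- (l * k)) + (1 + lc * k) * exp (l * k))"
    unfolding F_def pr_def by simp
  ultimately show ?thesis by simp
qed

lemma uniq:
  assumes D: "D > 0" and g: "g > 0" and ss: "steady_state D g lc cinf cs l c"
  shows "\<forall>x\<in>{0..l}. c x = pr (sqrt (g / D)) lc cinf l x"
proof -
  define k where "k = sqrt (g / D)"
  have k: "k > 0" using D g by (simp add: k_def)
  have k2: "k^2 = g / D" using D g by (simp add: k_def)
  from ss obtain c1 c2 where l: "l > 0"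
    and d1: "\<forall>x\<in>{0..l}. (c has_real_derivative c1 x) (at x within {0..l})"
    and d2: "\<forall>x\<in>{0..l}. (c1 has_real_derivative c2 x) (at x within {0..l})"
    and ode: "\<forall>x. 0 < x \<and> x < l \<longrightarrow> D * c2 x - g * c x = 0"
    and bc1: "D * c1 l = - g * lc * cinf" and bcl: "c l = cinf"
    unfolding steady_state_def by blast
  define w where "w x = c x - pr k lc cinf l x" for x
  define w1 where "w1 x = c1 x - dpr k lc cinf l x" for x
  define w2 where "w2 x = c2 x - k^2 * pr k lc cinf l x" for x
  have dw: "(w has_real_derivative w1 x) (at x within {0..l})" if "x \<in> {0..l}" for x
    unfolding w_def[abs_def] w1_def
    using d1 that pr_deriv[THEN has_field_derivative_at_within]
    by (intro DERIV_diff) auto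
  have dw1: "(w1 has_real_derivative w2 x) (at x within {0..l})" if "x \<in> {0..l}" for x
    unfolding w1_def[abs_def] w2_def
    using d2 that dpr_deriv[THEN has_field_derivative_at_within]
    by (intro DERIV_diff) auto
  have w2e: "w2 x = k^2 * w x" if "0 < x" "x < l" for x
  proof -
    have "D * c2 x = g * c x" using ode that by auto
    then have "D * c2 x = D * (k^2 * c x)" using D k2 by (simp add: field_simps)
    then have "c2 x = k^2 * c x" using D by simp
    then show ?thesis unfolding w2_def w_def by (simp add: algebra_simps)
  qed
  have wl: "w l = 0" unfolding w_def using bcl pr_l by simp
  have w1l: "w1 l = 0"
  proof -
    have "c1 l = - g / D * lc * cinf" using bc1 D by (simp add: field_simps)
    then show ?thesis unfolding w1_def dpr_l k2 by simp
  qed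
  have zero_fun: "((*) (0::real)) = (\<lambda>h. 0)" by auto
  have const: "f x = 0" if x: "x \<in> {0..l}"
     and df: "\<And>x. x \<in> {0..l} \<Longrightarrow> (f has_real_derivative f' x) (at x within {0..l})"
     and f0: "\<And>x. 0 < x \<Longrightarrow> x < l \<Longrightarrow> f' x = 0"
     and fl: "f l = 0" for f f' x
  proof -
    have e: "f y = f 0" if y: "y \<in> {0..l}" for y
    proof (rule has_derivative_zero_unique_strong_interval[of "{0, l}" 0 l f "f 0"])
      show "continuous_on {0..l} f" by (rule DERIV_continuous_on[OF df])
      show "(f has_derivative (\<lambda>h. 0)) (at z within {0..l})" if "z \<in> {0..l} - {0, l}" for z
      proof -
        have "(f has_real_derivative f' z) (at z within {0..l})" using df that by blast
        moreover have "f' z = 0" using f0 that by auto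
        ultimately show ?thesis by (simp add: has_field_derivative_def zero_fun)
      qed
    qed (use y in simp_all)
    have "f l = f 0" using e[of l] l by simp
    then show ?thesis using e[OF x] fl by simp
  qed
  show ?thesis
  proof
    fix x assume x: "x \<in> {0..l}"
    have u: "(w1 x - k * w x) * exp (k * x) = 0"
    proof (rule const[of x "\<lambda>x. (w1 x - k * w x) * exp (k * x)"
            "\<lambda>x. (w2 x - k * w1 x) * exp (k * x) + (w1 x - k * w x) * (exp (k * x) * k)"])
      show "((\<lambda>x. (w1 x - k * w x) * exp (k * x)) has_real_derivative
         (w2 y - k * w1 y) * exp (k * y) + (w1 y - k * w y) * (exp (k * y) * k)) (at y within {0..l})"
        if "y \<in> {0..l}" for y
        using dw[OF that] dw1[OF that]
        by (auto intro!: derivative_eq_intros)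
      show "(w2 y - k * w1 y) * exp (k * y) + (w1 y - k * w y) * (exp (k * y) * k) = 0"
        if "0 < y" "y < l" for y
        using w2e[OF that] by (simp add: algebra_simps power2_eq_square)
    qed (use x wl w1l in auto)
    have v: "(w1 x + k * w x) * exp (- k * x) = 0"
    proof (rule const[of x "\<lambda>x. (w1 x + k * w x) * exp (- k * x)"
            "\<lambda>x. (w2 x + k * w1 x) * exp (- k * x) + (w1 x + k * w x) * (exp (- k * x) * (- k))"])
      show "((\<lambda>x. (w1 x + k * w x) * exp (- k * x)) has_real_derivative
         (w2 y + k * w1 y) * exp (- k * y) + (w1 y + k * w y) * (exp (- k * y) * (- k))) (at y within {0..l})"
        if "y \<in> {0..l}" for y
        using dw[OF that] dw1[OF that]
        by (auto intro!: derivative_eq_intros)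
      show "(w2 y + k * w1 y) * exp (- k * y) + (w1 y + k * w y) * (exp (- k * y) * (- k)) = 0"
        if "0 < y" "y < l" for y
        using w2e[OF that] by (simp add: algebra_simps power2_eq_square)
    qed (use x wl w1l in auto)
    from u v have "w1 x - k * w x = 0" "w1 x + k * w x = 0" by auto
    then have "k * w x = 0" by linarith
    then have "w x = 0" using k by simp
    then show "c x = pr (sqrt (g / D)) lc cinf l x" unfolding w_def k_def by simp
  qed
qed

lemma profile_ss:
  assumes D: "D > 0" and g: "g > 0" and l: "l > 0"
  shows "steady_state D g lc cinf (F (sqrt (g / D)) lc cinf l) l (pr (sqrt (g / D)) lc cinf l)"
proof -
  define k where "k = sqrt (g / D)"
  have k2: "k^2 = g / D" using D g by (simp add: k_def)
  have "\<exists>c1 c2.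
        (\<forall>x\<in>{0..l}. (pr k lc cinf l has_real_derivative c1 x) (at x within {0..l})) \<and>
        (\<forall>x\<in>{0..l}. (c1 has_real_derivative c2 x) (at x within {0..l})) \<and>
        continuous_on {0..l} c2 \<and>
        (\<forall>x. 0 < x \<and> x < l \<longrightarrow> D * c2 x - g * pr k lc cinf l x = 0) \<and>
        D * c1 l = - g * lc * cinf"
  proof (intro exI conjI ballI allI impI)
    show "(pr k lc cinf l has_real_derivative dpr k lc cinf l x) (at x within {0..l})" for x
      by (rule has_field_derivative_at_within[OF pr_deriv])
    show "(dpr k lc cinf l has_real_derivative k^2 * pr k lc cinf l x) (at x within {0..l})" for x
      by (rule has_field_derivative_at_within[OF dpr_deriv])
    show "continuous_on {0..l} (\<lambda>x. k^2 * pr k lc cinf l x)"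
      unfolding pr_def by (intro continuous_intros)
    show "D * (k^2 * pr k lc cinf l x) - g * pr k lc cinf l x = 0" for x
      using D k2 by (simp add: field_simps)
    show "D * dpr k lc cinf l l = - g * lc * cinf"
      using D k2 by (simp add: dpr_l field_simps)
  qed
  then show ?thesis unfolding steady_state_def k_def[symmetric] F_def using l pr_l by simp
qed

theorem theorem2:
  fixes D g lc cinf cs :: real
  assumes "D > 0" and "g > 0" and "lc > 0" and "cinf > 0" and "cs \<ge> 0"
  shows "((\<exists>l c. steady_state D g lc cinf cs l c) \<longleftrightarrow> cs > cinf)
    \<and> (cs > cinf \<longrightarrow> (\<exists>!l. \<exists>c. steady_state D g lc cinf cs l c))
    \<and> (\<forall>l c. steady_state D g lc cinf cs l c \<longrightarrow>
          (\<forall>x\<in>{0..l}. c x = steady_profile D g lc cinf l x)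
        \<and> (\<forall>x\<in>{0..l}. \<forall>y\<in>{0..l}. x < y \<longrightarrow> c y < c x))"
proof -
  define k where "k = sqrt (g / D)"
  have k: "k > 0" using assms by (simp add: k_def)
  have sp: "steady_profile D g lc cinf l = pr k lc cinf l" for l
    unfolding steady_profile_def pr_def k_def by (simp add: fun_eq_iff)
  have U: "\<forall>x\<in>{0..l}. c x = pr k lc cinf l x" if "steady_state D g lc cinf cs l c" for l c
    using uniq[OF assms(1,2) that] unfolding k_def .
  have Fcs: "F k lc cinf l = cs \<and> l > 0" if "steady_state D g lc cinf cs l c" for l c
  proof -
    have l: "l > 0" and c0: "c 0 = cs" using that unfolding steady_state_def by auto
    then show ?thesis using U[OF that] unfolding F_def by auto
  qed
  have Finj: "a = b" if "a > 0" "b > 0" "F k lc cinf a = F k lc cinf b" for a b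
    using F_mono[OF k assms(3,4), of a b] F_mono[OF k assms(3,4), of b a] that
    by (cases a b rule: linorder_cases) auto
  have P1: "(\<exists>l c. steady_state D g lc cinf cs l c) \<longleftrightarrow> cs > cinf"
  proof
    assume "\<exists>l c. steady_state D g lc cinf cs l c"
    then obtain l c where "steady_state D g lc cinf cs l c" by blast
    from Fcs[OF this] show "cs > cinf" using F_mono[OF k assms(3,4), of 0 l] F_0 by auto
  next
    assume cs: "cs > cinf"
    define L where "L = 2 * cs / (cinf * (1 + lc * k) * k)"
    have A1: "1 + lc * k > 0" using assms k by (simp add: add_pos_pos)
    then have Mpos: "cinf * (1 + lc * k) * k > 0" using assms k by simp
    then have Lpos: "L > 0" unfolding L_def using cs assms by (auto intro!: divide_pos_pos)
    have "F k lc cinf L \<ge> cinf / 2 * (1 + lc * k) * (L * k)"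
      by (rule F_big) (use k assms Lpos in auto)
    also have "cinf / 2 * (1 + lc * k) * (L * k) = cs"
    proof -
      have "cinf / 2 * (1 + lc * k) * (L * k) = (cinf * (1 + lc * k) * k) / 2 * L" by simp
      also have "\<dots> = cs" unfolding L_def using Mpos k A1 assms(4) by simp
      finally show ?thesis .
    qed
    finally have FL: "F k lc cinf L \<ge> cs" .
    have "\<exists>x. 0 \<le> x \<and> x \<le> L \<and> F k lc cinf x = cs"
      by (rule IVT) (use F_0 cs FL Lpos F_deriv[THEN DERIV_isCont] in auto)
    then obtain l where l: "0 \<le> l" "F k lc cinf l = cs" by blast
    with F_0 cs have "l > 0" by (cases "l = 0") auto
    from profile_ss[OF assms(1,2) this, of lc cinf] show "\<exists>l c. steady_state D g lc cinf cs l c"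
      using l unfolding k_def by blast
  qed
  have P2: "cs > cinf \<longrightarrow> (\<exists>!l. \<exists>c. steady_state D g lc cinf cs l c)"
  proof
    assume "cs > cinf"
    with P1 obtain l c where s: "steady_state D g lc cinf cs l c" by blast
    show "\<exists>!l. \<exists>c. steady_state D g lc cinf cs l c"
    proof (rule ex1I[of _ l])
      show "\<exists>c. steady_state D g lc cinf cs l c" using s by blast
      fix l' assume "\<exists>c. steady_state D g lc cinf cs l' c"
      then obtain c' where "steady_state D g lc cinf cs l' c'" by blast
      from Fcs[OF this] Fcs[OF s] show "l' = l" using Finj by metis
    qed
  qed
  have P3: "(\<forall>x\<in>{0..l}. c x = steady_profile D g lc cinf l x)
        \<and> (\<forall>x\<in>{0..l}. \<forall>y\<in>{0..l}. x < y \<longrightarrow> c y < c x)"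
    if s: "steady_state D g lc cinf cs l c" for l c
  proof
    show "\<forall>x\<in>{0..l}. c x = steady_profile D g lc cinf l x" using U[OF s] sp by simp
    show "\<forall>x\<in>{0..l}. \<forall>y\<in>{0..l}. x < y \<longrightarrow> c y < c x"
    proof (intro ballI impI)
      fix x y assume x: "x \<in> {0..l}" and y: "y \<in> {0..l}" and xy: "x < y"
      have "pr k lc cinf l x > pr k lc cinf l y"
        by (rule DERIV_neg_imp_decreasing[OF xy])
           (use pr_deriv dpr_neg[OF k assms(3,4)] y in force)
      then show "c y < c x" using U[OF s] x y by simp
    qed
  qed
  show ?thesis using P1 P2 P3 by blast
qed

end
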